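(* Let $N\in\mathbb{N}$ and $a\in\mathbb{N}$. Then there exist $p,c,d\in\mathbb{N}$ such that $\gcd(a,p)=\gcd(a,c)=\gcd(c,d)=1$, $pc\equiv pd\equiv 1\pmod a$, $p>N$, $pc>aN$, and $d>\max\{(a-1)pc+a(N-1),\ ac\}$. *)

theory Defs
  imports "HOL-Number_Theory.Number_Theory"
begin

end

theory Submission
  imports Defs
begin

theorem lemma4p1:
  fixes N a :: nat
  assumes "N \<ge> 1" and "a \<ge> 1"
  shows "\<exists>p c d :: nat. p \<ge> 1 \<and> c \<ge> 1 \<and> d \<ge> 1 \<and>
    gcd a p = 1 \<and> gcd a c = 1 \<and> gcd c d = 1 \<and>
    [p * c = 1] (mod a) \<and> [p * d = 1] (mod a) \<and>
    p > N \<and> p * c > a * N \<and>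
    int d > max ((int a - 1) * int p * int c + int a * (int N - 1)) (int a * int c)"
proof -
  define q where "q = a * N + 1"
  define d where "d = 1 + q * (a * (q * q + N))"
  have "q = 1 + N * a" unfolding q_def by simp
  hence q1: "[q = 1] (mod a)" unfolding cong_def by (simp only: mod_mult_self1)
  have "d = 1 + (q * (q * q + N)) * a" unfolding d_def by (simp add: algebra_simps)
  hence d1: "[d = 1] (mod a)" unfolding cong_def by (simp only: mod_mult_self1)
  have "q = N * a + 1" unfolding q_def by simp
  hence gq: "gcd a q = 1" using gcd_add_mult[of a N 1] by simp
  have "d = (a * (q * q + N)) * q + 1" unfolding d_def by (simp add: algebra_simps)
  hence gd: "gcd q d = 1" using gcd_add_mult[of q "a * (q * q + N)" 1] by simp
  have c1: "[q * q = 1] (mod a)" using cong_mult[OF q1 q1] by simp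
  have c2: "[q * d = 1] (mod a)" using cong_mult[OF q1 d1] by simp
  have qN0: "1 * N \<le> a * N" using assms by (intro mult_le_mono1)
  have qN: "q > N" using qN0 unfolding q_def by linarith
  have qq: "q * q > a * N"
  proof -
    have "q \<ge> 1" unfolding q_def by simp
    hence "q * q \<ge> q" by simp
    thus ?thesis unfolding q_def by linarith
  qed
  have qpos: "q \<ge> 1" unfolding q_def by simp
  have "int d > max ((int a - 1) * int q * int q + int a * (int N - 1)) (int a * int q)"
  proof -
    have e: "int d = 1 + int q * (int a * (int q * int q + int N))" unfolding d_def by simp
    have A: "int q * (int a * (int q * int q + int N)) \<ge> int a * (int q * int q + int N)"
      using mult_right_mono[of 1 "int q" "int a * (int q * int q + int N)"] qpos by simp
    have B: "int a * (int q * int q + int N) \<ge> int a * int q * int q + int a * int N"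
      by (simp add: algebra_simps)
    have C: "int a * int q * int q \<ge> int a * int q" using mult_left_mono[of 1 "int q" "int a * int q"] qpos by simp
    have D: "(int a - 1) * int q * int q \<le> int a * int q * int q"
      by (simp add: algebra_simps)
    have E: "int a * (int N - 1) \<le> int a * int N" by (simp add: algebra_simps)
    have F: "int a * int q * int q \<ge> 0" by simp
    have G: "int a * int N \<ge> 0" by simp
    have H1: "(int a - 1) * int q * int q + int a * (int N - 1) < int d" using e A B C D E F G by linarith
    have H2: "int a * int q < int d" using e A B C D E F G by linarith
    show ?thesis using H1 H2 by simp
  qed
  thus ?thesis using qpos gq gd c1 c2 qN qq d_def
    by (intro exI[of _ q] exI[of _ q] exI[of _ d]) auto
qed

end
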